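(* Let $A=(a_{ij}) \in \mathbb{R}^{m\times r}$, $B=(b_{ij}) \in \mathbb{R}^{r\times n}$, let $S \subseteq \mathbb{R}^n$ be an arbitrary subset, and for $\kappa\in\mathbb{R}^r_+$ let $f_\kappa\colon \mathbb{R}^n_+\to\mathbb{R}^m$, $f_\kappa(x)=A_\kappa\, x^B$. The following statements are equivalent: (inj) $f_\kappa$ is injective with respect to $S$, for all $\kappa \in \mathbb{R}^r_+$. (jac) $\ker(J_{f_\kappa}(x)) \cap S^* = \emptyset$ for all $\kappa \in \mathbb{R}^r_+$ and $x \in \mathbb{R}^n_+$, where $J_{f_\kappa}(x)$ is the Jacobian matrix of $f_\kappa$ at $x$. (lin) $\ker(A_\kappa B_\lambda) \cap S^* = \emptyset$ for all $\kappa \in \mathbb{R}^r_+$ and $\lambda\in \mathbb{R}^n_+$. (sig) $\sigma(\ker(A)) \cap \sigma(B(\Sigma(S^* ))) = \emptyset$.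
   Context: $\mathbb{R}_+$ denotes the strictly positive reals. For $x\in\mathbb{R}^n_+$ and $B\in\mathbb{R}^{r\times n}$ with rows $b_1,\dots,b_r$, $x^B\in\mathbb{R}^r_+$ is the vector with $(x^B)_j = x^{b_j}=x_1^{b_{j1}}\cdots x_n^{b_{jn}}$ (real exponents allowed). For $\kappa\in\mathbb{R}^r_+$, $A_\kappa = A\,\mathrm{diag}(\kappa)$; for $\lambda\in\mathbb{R}^n_+$, $B_\lambda = B\,\mathrm{diag}(\lambda)$. A function $g$ defined on $\Omega\subseteq\mathbb{R}^n$ is injective with respect to $S\subseteq\mathbb{R}^n$ if $x,y\in\Omega$, $x\neq y$, $x-y\in S$ imply $g(x)\neq g(y)$ (here $\Omega=\mathbb{R}^n_+$). For $x\in\mathbb{R}^n$, $\sigma(x)\in\{-,0,+\}^n$ is the componentwise sign; for $S\subseteq\mathbb{R}^n$, $\sigma(S)=\{\sigma(x)\mid x\in S\}$, $\Sigma(S)=\sigma^{-1}(\sigma(S))$ (the set of all vectors having the sign vector of some element of $S$), and $S^*=S\setminus\{0\}$. A matrix $B$ is identified with the linear map $x\mapsto Bx$, and $B(S)=\{Bx\mid x\in S\}$. *)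

theory Defs
  imports "HOL-Analysis.Analysis"
begin

definition pos_vec :: "real^'n \<Rightarrow> bool" where
  "pos_vec x \<longleftrightarrow> (\<forall>i. x $ i > 0)"

definition diag_mat :: "real^'n \<Rightarrow> real^'n^'n" where
  "diag_mat v = (\<chi> i j. if i = j then v $ i else 0)"

definition monomials :: "real^'n \<Rightarrow> real^'n^'r \<Rightarrow> real^'r" where
  "monomials x B = (\<chi> j. \<Prod>i\<in>UNIV. (x $ i) powr (B $ j $ i))"

definition gmap :: "real^'r^'m \<Rightarrow> real^'n^'r \<Rightarrow> real^'r \<Rightarrow> real^'n \<Rightarrow> real^'m" where
  "gmap A B \<kappa> x = (A ** diag_mat \<kappa>) *v monomials x B"

definition inj_wrt :: "(real^'n \<Rightarrow> 'b) \<Rightarrow> (real^'n) set \<Rightarrow> bool" where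
  "inj_wrt g S \<longleftrightarrow> (\<forall>x y. pos_vec x \<and> pos_vec y \<and> x \<noteq> y \<and> x - y \<in> S \<longrightarrow> g x \<noteq> g y)"

text \<open>Sign vectors, encoded as real vectors with entries in {-1,0,1}.\<close>
definition sign_vec :: "real^'n \<Rightarrow> real^'n" where
  "sign_vec x = (\<chi> i. sgn (x $ i))"

definition sign_closure :: "(real^'n) set \<Rightarrow> (real^'n) set" where
  "sign_closure S = {y. \<exists>x\<in>S. sign_vec y = sign_vec x}"

definition mat_ker :: "real^'n^'m \<Rightarrow> (real^'n) set" where
  "mat_ker M = {v. M *v v = 0}"

end

theory Submission imports Defs begin

definition vmul :: "real^'n \<Rightarrow> real^'n \<Rightarrow> real^'n" where
  "vmul p v = (\<chi> i. p $ i * v $ i)"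

lemma diag_mult: "diag_mat p *v w = vmul p w"
  proof -
  have "(\<Sum>j\<in>UNIV. (if i = j then p $ i else 0) * w $ j) = p $ i * w $ i" for i
    by (simp add: if_distrib[of "\<lambda>t. t * w $ _"] cong: if_cong)
  then show ?thesis by (simp add: vec_eq_iff diag_mat_def matrix_vector_mult_def vmul_def)
qed

lemma sign_vmul: "pos_vec p \<Longrightarrow> sign_vec (vmul p w) = sign_vec w"
  by (simp add: vec_eq_iff sign_vec_def vmul_def sgn_mult pos_vec_def)

lemma sgn_div_pos: fixes a b :: real assumes "sgn a = sgn b" "b \<noteq> 0" shows "a / b > 0"
  using assms by (cases rule: linorder_cases[of b 0]) (auto simp: sgn_if divide_neg_neg split: if_splits)

lemma sign_match:
  assumes "sign_vec y = sign_vec z"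
  shows "\<exists>p. pos_vec p \<and> vmul p z = y"
proof (intro exI conjI)
  let ?p = "\<chi> i. if z $ i = 0 then 1 else y $ i / z $ i"
  have s: "sgn (y$i) = sgn (z$i)" for i using assms by (simp add: vec_eq_iff sign_vec_def)
  show "pos_vec ?p" using sgn_div_pos[OF s] by (simp add: pos_vec_def)
  show "vmul ?p z = y" using s by (auto simp: vec_eq_iff vmul_def) (metis sgn_0_0)
qed

lemma mono_exp: assumes "pos_vec x"
  shows "monomials x B $ j = exp ((B *v (\<chi> i. ln (x$i))) $ j)"
  using assms by (simp add: monomials_def powr_def pos_vec_def exp_sum matrix_vector_mult_def less_imp_neq[symmetric] mult.commute)

lemma sgn_exp_diff: "sgn (exp a - exp c) = sgn ((a::real) - c)"
  by (cases rule: linorder_cases[of a c]) auto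

lemma sign_mono_diff: assumes "pos_vec x" "pos_vec y"
  shows "sign_vec (monomials x B - monomials y B) = sign_vec (B *v (\<chi> i. ln(x$i) - ln(y$i)))"
proof -
  have e: "(\<chi> i. ln(x$i) - ln(y$i)) = (\<chi> i. ln(x$i)) - (\<chi> i. ln(y$i))" by (simp add: vec_eq_iff)
  have "sgn (monomials x B $ j - monomials y B $ j) = sgn ((B *v (\<chi> i. ln(x$i) - ln(y$i))) $ j)" for j
    unfolding mono_exp[OF assms(1)] mono_exp[OF assms(2)] e matrix_vector_mult_diff_distrib
    by (simp only: sgn_exp_diff vector_minus_component)
  then show ?thesis by (simp add: vec_eq_iff sign_vec_def)
qed

lemma mono_deriv:
  fixes x :: "real^'n" and B :: "real^'n^'r"
  assumes pos: "pos_vec x"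
  shows "((\<lambda>y. monomials y B) has_derivative (\<lambda>v. vmul (monomials x B) (B *v (\<chi> i. v$i / x$i)))) (at x)"
proof -
  have comp: "((\<lambda>y. monomials y B $ j) has_derivative
     (\<lambda>v. monomials x B $ j * (\<Sum>i\<in>UNIV. B$j$i * (v$i / x$i)))) (at x)" for j
  proof -
    have lin: "((\<lambda>y. y $ i) has_derivative (\<lambda>v. v $ i)) (at x)" for i
      by (simp add: bounded_linear_imp_has_derivative bounded_linear_vec_nth)
    have d: "((\<lambda>y. (y$i) powr (B$j$i)) has_derivative
       (\<lambda>v. (x$i) powr (B$j$i) * (0 * ln (x$i) + v$i * (B$j$i) / x$i))) (at x)" for i
      by (rule has_derivative_powr[OF lin has_derivative_const]) (use pos in \<open>auto simp: pos_vec_def\<close>)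
    have "((\<lambda>y. \<Prod>i\<in>UNIV. (y$i) powr (B$j$i)) has_derivative
       (\<lambda>v. \<Sum>i\<in>UNIV. (x$i) powr (B$j$i) * (0 * ln (x$i) + v$i * (B$j$i) / x$i) *
           (\<Prod>k\<in>UNIV - {i}. (x$k) powr (B$j$k)))) (at x)"
      by (rule has_derivative_prod) (rule d)
    moreover have "(\<lambda>v. \<Sum>i\<in>UNIV. (x$i) powr (B$j$i) * (0 * ln (x$i) + v$i * (B$j$i) / x$i) *
           (\<Prod>k\<in>UNIV - {i}. (x$k) powr (B$j$k))) =
        (\<lambda>v. monomials x B $ j * (\<Sum>i\<in>UNIV. B$j$i * (v$i / x$i)))"
    proof
      fix v
      show "(\<Sum>i\<in>UNIV. (x$i) powr (B$j$i) * (0 * ln (x$i) + v$i * (B$j$i) / x$i) *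
           (\<Prod>k\<in>UNIV - {i}. (x$k) powr (B$j$k))) = monomials x B $ j * (\<Sum>i\<in>UNIV. B$j$i * (v$i / x$i))"
        unfolding sum_distrib_left monomials_def vec_lambda_beta
      proof (rule sum.cong[OF refl])
        fix i :: 'n
        show "(x$i) powr (B$j$i) * (0 * ln (x$i) + v$i * (B$j$i) / x$i) *
           (\<Prod>k\<in>UNIV - {i}. (x$k) powr (B$j$k)) = (\<Prod>k\<in>UNIV. (x$k) powr (B$j$k)) * (B$j$i * (v$i / x$i))"
          by (subst prod.remove[of UNIV i]) auto
      qed
    qed
    ultimately show ?thesis by (simp add: monomials_def)
  qed
  show ?thesis
  proof (rule iffD2[OF has_derivative_componentwise_within[where S=UNIV, simplified]], rule ballI)
    fix b :: "real^'r" assume "b \<in> Basis"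
    then obtain j where b: "b = axis j 1" by (auto simp: Basis_vec_def)
    show "((\<lambda>y. monomials y B \<bullet> b) has_derivative
          (\<lambda>v. vmul (monomials x B) (B *v (\<chi> i. v$i / x$i)) \<bullet> b)) (at x)"
      unfolding b inner_axis using comp[of j]
      by (simp add: vmul_def matrix_vector_mult_def)
  qed
qed



lemma vmul_diff: "vmul p (a - b) = vmul p a - vmul p b"
  by (simp add: vec_eq_iff vmul_def right_diff_distrib)

lemma vmul_assoc: "vmul p (vmul q w) = vmul (vmul p q) w"
  by (simp add: vec_eq_iff vmul_def)

lemma gmap_eq: "gmap A B \<kappa> x = A *v vmul \<kappa> (monomials x B)"
  by (simp add: gmap_def matrix_vector_mul_assoc[symmetric] diag_mult)

lemma lin_eq: "((A ** diag_mat \<kappa>) ** (B ** diag_mat l)) *v v = A *v vmul \<kappa> (B *v vmul l v)"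
  by (simp add: matrix_vector_mul_assoc[symmetric] diag_mult)

lemma mono_pos: "pos_vec x \<Longrightarrow> pos_vec (monomials x B)"
  by (auto simp: pos_vec_def monomials_def intro!: prod_pos) (metis order_less_irrefl)

lemma jac_eq:
  fixes A :: "real^'r^'m" and B :: "real^'n^'r" and x :: "real^'n"
  assumes "pos_vec x"
  shows "jacobian (gmap A B \<kappa>) (at x) *v v =
     A *v vmul (vmul \<kappa> (monomials x B)) (B *v vmul (\<chi> i. 1 / x$i) v)"
proof -
  have D: "(gmap A B \<kappa> has_derivative
     (\<lambda>v. (A ** diag_mat \<kappa>) *v vmul (monomials x B) (B *v (\<chi> i. v$i / x$i)))) (at x)"
    unfolding gmap_def
    by (rule bounded_linear.has_derivative[OF matrix_vector_mul_bounded_linear mono_deriv[OF assms]])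
  have "jacobian (gmap A B \<kappa>) (at x) *v v = (A ** diag_mat \<kappa>) *v vmul (monomials x B) (B *v (\<chi> i. v$i / x$i))"
  proof -
    have dd: "gmap A B \<kappa> differentiable (at x)" using D by (rule differentiableI)
    have "(\<lambda>h. jacobian (gmap A B \<kappa>) (at x) *v h) =
      (\<lambda>v. (A ** diag_mat \<kappa>) *v vmul (monomials x B) (B *v (\<chi> i. v$i / x$i)))"
      by (rule has_derivative_unique[OF iffD1[OF jacobian_works dd] D])
    then show ?thesis by metis
  qed
  also have "\<dots> = A *v vmul (vmul \<kappa> (monomials x B)) (B *v vmul (\<chi> i. 1 / x$i) v)"
    by (simp add: matrix_vector_mul_assoc[symmetric] diag_mult vmul_assoc) (simp add: vmul_def)
  finally show ?thesis .
qed

lemma sgn_ln_diff: "(a::real) > 0 \<Longrightarrow> b > 0 \<Longrightarrow> sgn (ln a - ln b) = sgn (a - b)"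
  by (cases rule: linorder_cases[of a b]) auto

theorem theorem1:
  fixes A :: "real^'r^'m" and B :: "real^'n^'r" and S :: "(real^'n) set"
  defines "inj_c \<equiv> (\<forall>\<kappa>. pos_vec \<kappa> \<longrightarrow> inj_wrt (gmap A B \<kappa>) S)"
      and "jac_c \<equiv> (\<forall>\<kappa> x. pos_vec \<kappa> \<and> pos_vec x \<longrightarrow>
                 mat_ker (jacobian (gmap A B \<kappa>) (at x)) \<inter> (S - {0}) = {})"
      and "lin_c \<equiv> (\<forall>\<kappa> l. pos_vec \<kappa> \<and> pos_vec l \<longrightarrow>
                 mat_ker ((A ** diag_mat \<kappa>) ** (B ** diag_mat l)) \<inter> (S - {0}) = {})"
      and "sig_c \<equiv> (sign_vec ` mat_ker A \<inter>
                 sign_vec ` ((\<lambda>y. B *v y) ` sign_closure (S - {0})) = {})"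
  shows "(inj_c \<longleftrightarrow> jac_c) \<and> (jac_c \<longleftrightarrow> lin_c) \<and> (lin_c \<longleftrightarrow> sig_c)"
proof -
  define P where "P \<kappa> l \<longleftrightarrow> (\<forall>v\<in>S - {0}. A *v vmul \<kappa> (B *v vmul l v) \<noteq> 0)" for \<kappa> l
  have linE: "lin_c \<longleftrightarrow> (\<forall>\<kappa> l. pos_vec \<kappa> \<and> pos_vec l \<longrightarrow> P \<kappa> l)"
    unfolding lin_c_def P_def mat_ker_def lin_eq by blast
  have jacE: "jac_c \<longleftrightarrow> (\<forall>\<kappa> x. pos_vec \<kappa> \<and> pos_vec x \<longrightarrow>
      P (vmul \<kappa> (monomials x B)) (\<chi> i. 1 / x$i))"
    unfolding jac_c_def P_def mat_ker_def by (auto simp: jac_eq)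
  have sigE: "sig_c \<longleftrightarrow> (\<forall>u y z. A *v u = 0 \<longrightarrow> z \<in> S \<longrightarrow> z \<noteq> 0 \<longrightarrow>
      sign_vec y = sign_vec z \<longrightarrow> sign_vec u \<noteq> sign_vec (B *v y))"
    unfolding sig_c_def mat_ker_def sign_closure_def by (auto simp: image_iff; blast)
  have posvm: "pos_vec p \<Longrightarrow> pos_vec q \<Longrightarrow> pos_vec (vmul p q)" for p q
    by (simp add: pos_vec_def vmul_def)
  have posinv: "pos_vec x \<Longrightarrow> pos_vec (\<chi> i. 1 / x$i)" for x :: "real^'n"
    by (simp add: pos_vec_def)
  have lin_jac: "lin_c \<longleftrightarrow> jac_c"
  proof
    assume lin_c then show jac_c unfolding linE jacE using posvm posinv mono_pos by blast
  next
    assume J: jac_c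
    show lin_c unfolding linE
    proof (intro allI impI)
      fix \<kappa> :: "real^'r" and l :: "real^'n" assume kl: "pos_vec \<kappa> \<and> pos_vec l"
      define x where "x = (\<chi> i. 1 / l$i)"
      have px: "pos_vec x" using kl by (simp add: x_def pos_vec_def)
      define \<kappa>' where "\<kappa>' = (\<chi> j. \<kappa>$j / monomials x B $ j)"
      have mp: "monomials x B $ j > 0" for j using mono_pos[OF px, of B] by (simp add: pos_vec_def)
      have pk: "pos_vec \<kappa>'" using kl mp by (simp add: \<kappa>'_def pos_vec_def)
      have e1: "vmul \<kappa>' (monomials x B) = \<kappa>" using mp by (simp add: vec_eq_iff vmul_def \<kappa>'_def less_imp_neq[symmetric])
      have e2: "(\<chi> i. 1 / x$i) = l" by (simp add: vec_eq_iff x_def)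
      show "P \<kappa> l" using J[unfolded jacE, rule_format, of \<kappa>' x] pk px e1 e2 by simp
    qed
  qed
  have lin_sig: "lin_c \<longleftrightarrow> sig_c"
  proof
    assume L: lin_c
    show sig_c unfolding sigE
    proof (intro allI impI notI)
      fix u y z assume Au: "A *v u = 0" and zS: "z \<in> S" and z0: "z \<noteq> 0"
        and yz: "sign_vec y = sign_vec z" and uy: "sign_vec u = sign_vec (B *v y)"
      obtain l where pl: "pos_vec l" and l: "vmul l z = y" using sign_match[OF yz] by blast
      obtain \<kappa> where pk: "pos_vec \<kappa>" and k: "vmul \<kappa> (B *v y) = u" using sign_match[OF uy] by blast
      have "P \<kappa> l" using L pl pk unfolding linE by blast
      then show False using zS z0 Au k l unfolding P_def by auto
    qed
  next
    assume G: sig_c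
    show lin_c unfolding linE P_def
    proof (intro allI impI ballI notI)
      fix \<kappa> l v assume kl: "pos_vec \<kappa> \<and> pos_vec l" and v: "v \<in> S - {0}"
        and A0: "A *v vmul \<kappa> (B *v vmul l v) = 0"
      have "sign_vec (vmul l v) = sign_vec v" using kl sign_vmul by blast
      moreover have "sign_vec (vmul \<kappa> (B *v vmul l v)) = sign_vec (B *v vmul l v)" using kl sign_vmul by blast
      ultimately show False using G[unfolded sigE, rule_format, OF A0, of v "vmul l v"] v by auto
    qed
  qed
  have inj_sig: "inj_c \<longleftrightarrow> sig_c"
  proof
    assume G: sig_c
    show inj_c unfolding inj_c_def inj_wrt_def
    proof (intro allI impI notI)
      fix \<kappa> x y :: "real^_" assume pk: "pos_vec \<kappa>"
        and H: "pos_vec x \<and> pos_vec y \<and> x \<noteq> y \<and> x - y \<in> S" and eq: "gmap A B \<kappa> x = gmap A B \<kappa> y"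
      let ?u = "vmul \<kappa> (monomials x B - monomials y B)"
      let ?w = "\<chi> i. ln (x$i) - ln (y$i)"
      have Au: "A *v ?u = 0" using eq
        by (simp add: gmap_eq vmul_diff matrix_vector_mult_diff_distrib)
      have sw: "sign_vec ?w = sign_vec (x - y)" using H
        by (simp add: vec_eq_iff sign_vec_def sgn_ln_diff pos_vec_def)
      have su: "sign_vec ?u = sign_vec (B *v ?w)"
        using sign_vmul[OF pk] sign_mono_diff H by metis
      show False using G[unfolded sigE, rule_format, OF Au _ _ sw] su H by auto
    qed
  next
    assume I: inj_c
    show sig_c unfolding sigE
    proof (intro allI impI notI)
      fix u y z assume Au: "A *v u = 0" and zS: "z \<in> S" and z0: "z \<noteq> 0"
        and yz: "sign_vec y = sign_vec z" and uy: "sign_vec u = sign_vec (B *v y)"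
      have s: "sgn (y$i) = sgn (z$i)" for i using yz by (simp add: vec_eq_iff sign_vec_def)
      define yy where "yy = (\<chi> i. if z$i = 0 then 1 else z$i / (exp (y$i) - 1))"
      define xx where "xx = (\<chi> i. yy$i * exp (y$i))"
      have se: "sgn (exp (y$i) - 1) = sgn (z$i)" for i
        using sgn_exp_diff[of "y$i" 0] s[of i] by simp
      have pyy: "yy$i > 0" for i
      proof (cases "z$i = 0")
        case False
        then have "exp (y$i) - 1 \<noteq> 0" using se[of i] by (metis sgn_0_0 sgn_zero)
        then show ?thesis using sgn_div_pos[OF se[symmetric, of i]] False by (simp add: yy_def)
      qed (simp add: yy_def)
      have pyv: "pos_vec yy" using pyy by (simp add: pos_vec_def)
      have pxv: "pos_vec xx" using pyy by (simp add: pos_vec_def xx_def)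
      have dz: "xx - yy = z"
      proof -
        have "xx$i - yy$i = z$i" for i
        proof (cases "z$i = 0")
          case True
          then have "y$i = 0" using s[of i] by (metis sgn_0_0)
          then show ?thesis using True by (simp add: xx_def yy_def)
        next
          case False
          then have "exp (y$i) - 1 \<noteq> 0" using se[of i] by (metis sgn_0_0 sgn_zero)
          then have "z$i / (exp (y$i) - 1) * exp (y$i) - z$i / (exp (y$i) - 1) = z$i / (exp (y$i) - 1) * (exp (y$i) - 1)"
            by (simp add: right_diff_distrib)
          also have "\<dots> = z$i" using \<open>exp (y$i) - 1 \<noteq> 0\<close> by simp
          finally show ?thesis using False by (simp add: xx_def yy_def)
        qed
        then show ?thesis by (simp add: vec_eq_iff)
      qed
      have dl: "(\<chi> i. ln (xx$i) - ln (yy$i)) = y"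
        using pyy by (simp add: vec_eq_iff xx_def ln_mult) (metis less_irrefl)
      have "sign_vec (monomials xx B - monomials yy B) = sign_vec u"
        using sign_mono_diff[OF pxv pyv, of B] dl uy by simp
      then obtain \<kappa> where pk: "pos_vec \<kappa>" and k: "vmul \<kappa> (monomials xx B - monomials yy B) = u"
        using sign_match by metis
      have "A *v (vmul \<kappa> (monomials xx B) - vmul \<kappa> (monomials yy B)) = 0"
        using Au k by (simp only: vmul_diff)
      then have "gmap A B \<kappa> xx = gmap A B \<kappa> yy"
        by (simp add: gmap_eq matrix_vector_mult_diff_distrib)
      moreover have "xx \<noteq> yy" using dz z0 by auto
      moreover have "inj_wrt (gmap A B \<kappa>) S" using I pk unfolding inj_c_def by blast
      ultimately show False using pxv pyv dz zS unfolding inj_wrt_def by blast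
    qed
  qed
  show ?thesis using inj_sig lin_sig lin_jac by blast
qed

end
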